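(* Let $N$ be large enough that $g(N)<N$, $(N-1)\sqrt{\frac{\ln N}{N}}\ge\frac{8h}{\sqrt5}$, and $\left(N-\frac32\right)\ln\left(1+\sqrt{\frac{5\ln N}{N}}\right)\ge8h$. Then in any round $r$, with probability at least $1-\frac{6M+3}{N^{10}}$, $$\xi_0\ge1-\sqrt{\frac{5\ln N}{N}}\qquad\text{and}\qquad\xi_1\le1+\sqrt{\frac{5\ln N}{N}},$$ where $\xi_0=\left(1-\frac{2}{N^2+1}\right)^{V^r_i}\left(1-\frac{2}{N^3-N^2+1}\right)^{V^r-V^r_i}$ and $\xi_1=\left(1+\frac{2}{N^2-1}\right)^{V^r_i}\left(1+\frac{2}{N^3-N^2-1}\right)^{V^r-V^r_i}$.
   Context: Setting. $\mathcal G=(\mathcal N,\mathcal E)$ is a connected, non-bipartite undirected graph on agents $\mathcal N=\{1,\dots,N\}$; $\mathcal N_i$ is the neighbor set of $i$, $N_i=|\mathcal N_i|$. There are $M$ options; quality signals $\Phi_j^r\in\{0,1\}$ are i.i.d. Bernoulli$(\eta_j)$ over rounds. $X^r_{i,j}\in\{0,1\}$ indicates agent $i$ adopts option $j$ in round $r$ ($\sum_jX^r_{i,j}\le1$). The function $g:\mathbb N^+\to\mathbb R$ satisfies: for every $\ell>0$, $g(N)>\ell\ln N$ and $g(N)<\ell N$ for all sufficiently large $N$. Parameters: $\varepsilon>0$, $\mu\in(0,1)$, $\beta\in(1/2,1)$, $\sigma\ge11$, $h=16\sigma/(1-\beta)$. Metropolis–Hastings random walk: from $i$ move to $i'\in\mathcal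 N_i$ with probability $\min\{1/N_i,1/N_{i'}\}$, else stay; walk length $L=O(\log N)$ chosen so that the endpoint is at each agent with probability in $[\frac1N-\frac1{N^3},\frac1N+\frac1{N^3}]$. Round $r$: (1) an agent that adopted an option in round $r-1$ perturbs each coordinate of its adoption vector independently (keep with probability $\frac{e^{\varepsilon/2}}{e^{\varepsilon/2}+1}$, flip otherwise); (2) each such agent launches $hg(N)$ independent random-walk tokens of length $L$ carrying its perturbed vector (forwarded via per-agent FIFO queues, up to $hg(N)$ tokens per agent per slot); a token is sampled by the agent where it ends; $V^r$ is the total number of tokens and $V^r_i$ the number sampled by $i$; (3) with $\Lambda^r_{i,j}$ the fraction of $i$'s sampled vectors with $j$-th coordinate $1$, $\widetilde Q^r_{i,j}=\max\{\frac{e^{\varepsilon/2}+1}{e^{\varepsilon/2}-1}\Lambda^r_{i,j}-\frac1{e^{\varepsilon/2}-1},0\}$, $\widehat Q^r_{i,j}=\widetilde Q^r_{i,j}/\sum_{j'}\widetilde Q^r_{i,j'}$, and $i$ selects option $j$ with probability $(1-\mu)\widehat Q^r_{i,j}+\mu/M$; (4) having selected $j^*$, $i$ adopts it with probability $\beta$ if $\Phi^r_{j^*}=1$, $1-\beta$ if $\Phi^r_{j^*}=0$, else adopts nothing. *)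

theory Defs
  imports "HOL-Probability.Probability" "HOL-Library.FuncSet"
begin

text \<open>Agents are 1..N; the undirected graph is a symmetric irreflexive relation E on them.\<close>
definition agents :: "nat \<Rightarrow> nat set" where
  "agents N = {1..N}"

definition nbrs :: "(nat \<Rightarrow> nat \<Rightarrow> bool) \<Rightarrow> nat \<Rightarrow> nat \<Rightarrow> nat set" where
  "nbrs E N i = {j \<in> agents N. E i j}"

definition deg :: "(nat \<Rightarrow> nat \<Rightarrow> bool) \<Rightarrow> nat \<Rightarrow> nat \<Rightarrow> nat" where
  "deg E N i = card (nbrs E N i)"

definition graph_connected :: "(nat \<Rightarrow> nat \<Rightarrow> bool) \<Rightarrow> nat \<Rightarrow> bool" where
  "graph_connected E N = (\<forall>a\<in>agents N. \<forall>b\<in>agents N. E\<^sup>*\<^sup>* a b)"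

definition graph_bipartite :: "(nat \<Rightarrow> nat \<Rightarrow> bool) \<Rightarrow> nat \<Rightarrow> bool" where
  "graph_bipartite E N =
     (\<exists>c :: nat \<Rightarrow> bool. \<forall>a\<in>agents N. \<forall>b\<in>agents N. E a b \<longrightarrow> c a \<noteq> c b)"

definition mh_P :: "(nat \<Rightarrow> nat \<Rightarrow> bool) \<Rightarrow> nat \<Rightarrow> nat \<Rightarrow> nat \<Rightarrow> real" where
  "mh_P E N i j =
     (if i \<noteq> j \<and> j \<in> nbrs E N i then min (1 / real (deg E N i)) (1 / real (deg E N j))
      else if i = j then 1 - (\<Sum>k\<in>nbrs E N i. min (1 / real (deg E N i)) (1 / real (deg E N k)))
      else 0)"

fun walkprob :: "(nat \<Rightarrow> nat \<Rightarrow> bool) \<Rightarrow> nat \<Rightarrow> nat \<Rightarrow> nat \<Rightarrow> nat \<Rightarrow> real" where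
  "walkprob E N 0 i j = (if i = j then 1 else 0)"
| "walkprob E N (Suc n) i j = (\<Sum>k\<in>agents N. walkprob E N n i k * mh_P E N k j)"

text \<open>Tokens of a round: each adopter s in S launches K tokens (s,0),...,(s,K-1).\<close>
definition tokens :: "nat set \<Rightarrow> nat \<Rightarrow> (nat \<times> nat) set" where
  "tokens S K = S \<times> {..<K}"

text \<open>Probability (over the independent length-L walks of all tokens) that the
  endpoint assignment f (token \<mapsto> agent where it is sampled) satisfies P.\<close>
definition ends_prob ::
  "(nat \<Rightarrow> nat \<Rightarrow> bool) \<Rightarrow> nat \<Rightarrow> nat \<Rightarrow> nat set \<Rightarrow> nat \<Rightarrow> ((nat \<times> nat \<Rightarrow> nat) \<Rightarrow> bool) \<Rightarrow> real"
  where
  "ends_prob E N L S K P =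
     (\<Sum>f \<in> tokens S K \<rightarrow>\<^sub>E agents N.
        (\<Prod>t\<in>tokens S K. walkprob E N L (fst t) (f t)) * (if P f then 1 else 0))"

definition xi0 :: "nat \<Rightarrow> nat \<Rightarrow> nat \<Rightarrow> real" where
  "xi0 N V Vi = (1 - 2 / (real N ^ 2 + 1)) ^ Vi * (1 - 2 / (real N ^ 3 - real N ^ 2 + 1)) ^ (V - Vi)"

definition xi1 :: "nat \<Rightarrow> nat \<Rightarrow> nat \<Rightarrow> real" where
  "xi1 N V Vi = (1 + 2 / (real N ^ 2 - 1)) ^ Vi * (1 + 2 / (real N ^ 3 - real N ^ 2 - 1)) ^ (V - Vi)"

end

theory Submission
  imports Defs
begin

lemma mh_rowsum:
  assumes irr: "\<And>a. \<not> E a a" and k: "k \<in> agents N"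
  shows "(\<Sum>j\<in>agents N. mh_P E N k j) = 1"
proof -
  have fin: "finite (agents N)" by (simp add: agents_def)
  have nb: "nbrs E N k \<subseteq> agents N - {k}" using irr by (auto simp: nbrs_def)
  have "(\<Sum>j\<in>agents N. mh_P E N k j) = mh_P E N k k + (\<Sum>j\<in>agents N - {k}. mh_P E N k j)"
    using k fin by (simp add: sum.remove)
  also have "(\<Sum>j\<in>agents N - {k}. mh_P E N k j) = (\<Sum>j\<in>agents N - {k}. if j \<in> nbrs E N k then min (1 / real (deg E N k)) (1 / real (deg E N j)) else 0)"
    by (intro sum.cong) (auto simp: mh_P_def)
  also have "\<dots> = (\<Sum>j\<in>nbrs E N k. min (1 / real (deg E N k)) (1 / real (deg E N j)))"
    using nb fin by (simp add: sum.If_cases Int_absorb1)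
  finally show ?thesis by (simp add: mh_P_def)
qed

lemma walk_rowsum:
  assumes irr: "\<And>a. \<not> E a a" and s: "s \<in> agents N"
  shows "(\<Sum>j\<in>agents N. walkprob E N n s j) = 1"
proof (induction n)
  case 0
  have fin: "finite (agents N)" by (simp add: agents_def)
  show ?case using s fin by (simp add: sum.delta)
next
  case (Suc n)
  have "(\<Sum>j\<in>agents N. walkprob E N (Suc n) s j) = (\<Sum>k\<in>agents N. walkprob E N n s k * (\<Sum>j\<in>agents N. mh_P E N k j))"
    unfolding walkprob.simps sum_distrib_left by (rule sum.swap)
  also have "\<dots> = (\<Sum>k\<in>agents N. walkprob E N n s k)"
    by (intro sum.cong refl) (simp add: mh_rowsum[where E=E, OF irr])
  finally show ?case using Suc by simp
qed

lemma chernoff_fin: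
  fixes w :: "'a \<Rightarrow> 'b \<Rightarrow> real"
  assumes I: "finite I" and A: "finite A" and iA: "i \<in> A"
    and nn: "\<And>t j. t \<in> I \<Longrightarrow> j \<in> A \<Longrightarrow> 0 \<le> w t j"
    and rs: "\<And>t. t \<in> I \<Longrightarrow> (\<Sum>j\<in>A. w t j) = 1"
    and PT: "\<And>f. f \<in> I \<rightarrow>\<^sub>E A \<Longrightarrow> real (card {t\<in>I. f t = i}) \<le> T \<Longrightarrow> P f"
  shows "(\<Sum>f\<in>I \<rightarrow>\<^sub>E A. (\<Prod>t\<in>I. w t (f t)) * (if P f then 1 else 0))
          \<ge> 1 - exp ((exp 1 - 1) * (\<Sum>t\<in>I. w t i) - T)"
proof -
  define W where "W f = (\<Prod>t\<in>I. w t (f t))" for f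
  have Wnn: "W f \<ge> 0" if "f \<in> I \<rightarrow>\<^sub>E A" for f
    unfolding W_def using that nn by (intro prod_nonneg) auto
  have finP: "finite (I \<rightarrow>\<^sub>E A)" using I A by (simp add: finite_PiE)
  have tot: "(\<Sum>f\<in>I \<rightarrow>\<^sub>E A. W f) = 1"
    unfolding W_def using prod_sum_PiE[OF I, of "\<lambda>_. A" w] A rs by simp
  have cnt: "real (card {t\<in>I. f t = i}) = (\<Sum>t\<in>I. if f t = i then 1 else 0)" for f
  proof -
    have "{t\<in>I. f t = i} = I \<inter> {t. f t = i}" by auto
    then show ?thesis using I by (simp add: sum.If_cases)
  qed
  have bad: "(\<Sum>f\<in>I \<rightarrow>\<^sub>E A. W f * (if P f then 0 else 1))
      \<le> (\<Sum>f\<in>I \<rightarrow>\<^sub>E A. W f * exp (real (card {t\<in>I. f t = i}) - T))"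
  proof (rule sum_mono)
    fix f assume f: "f \<in> I \<rightarrow>\<^sub>E A"
    show "W f * (if P f then 0 else 1) \<le> W f * exp (real (card {t\<in>I. f t = i}) - T)"
    proof (cases "P f")
      case True then show ?thesis using Wnn[OF f] by simp
    next
      case False
      then have "real (card {t\<in>I. f t = i}) > T" using PT[OF f] by force
      then have "1 \<le> exp (real (card {t\<in>I. f t = i}) - T)" by simp
      then have "W f * 1 \<le> W f * exp (real (card {t\<in>I. f t = i}) - T)"
        using Wnn[OF f] by (rule mult_left_mono)
      then show ?thesis using False by simp
    qed
  qed
  also have "\<dots> = exp (-T) * (\<Sum>f\<in>I \<rightarrow>\<^sub>E A. \<Prod>t\<in>I. w t (f t) * exp (if f t = i then 1 else 0))"
    unfolding W_def cnt
    by (simp add: sum_distrib_left exp_diff exp_sum[OF I] prod.distrib exp_minus field_simps)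
  also have "(\<Sum>f\<in>I \<rightarrow>\<^sub>E A. \<Prod>t\<in>I. w t (f t) * exp (if f t = i then 1 else 0))
       = (\<Prod>t\<in>I. \<Sum>j\<in>A. w t j * exp (if j = i then 1 else 0))"
    using prod_sum_PiE[OF I, of "\<lambda>_. A" "\<lambda>t j. w t j * exp (if j = i then 1 else 0)"] A by simp
  also have "\<dots> \<le> (\<Prod>t\<in>I. exp ((exp 1 - 1) * w t i))"
  proof (rule prod_mono)
    fix t assume t: "t \<in> I"
    have "(\<Sum>j\<in>A. w t j * exp (if j = i then 1 else 0)) = (\<Sum>j\<in>A. w t j + (if j = i then (exp 1 - 1) * w t j else 0))"
      by (intro sum.cong) (auto simp: algebra_simps)
    also have "\<dots> = 1 + (exp 1 - 1) * w t i" using rs[OF t] iA A by (simp add: sum.distrib)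
    also have "\<dots> \<le> exp ((exp 1 - 1) * w t i)" by (rule exp_ge_add_one_self)
    finally show "0 \<le> (\<Sum>j\<in>A. w t j * exp (if j = i then 1 else 0)) \<and>
         (\<Sum>j\<in>A. w t j * exp (if j = i then 1 else 0)) \<le> exp ((exp 1 - 1) * w t i)"
      using nn t by (auto intro!: sum_nonneg)
  qed
  also have "\<dots> = exp ((exp 1 - 1) * (\<Sum>t\<in>I. w t i))"
    by (simp add: exp_sum[OF I, symmetric] sum_distrib_left)
  finally have b2: "(\<Sum>f\<in>I \<rightarrow>\<^sub>E A. W f * (if P f then 0 else 1)) \<le> exp (-T) * exp ((exp 1 - 1) * (\<Sum>t\<in>I. w t i))"
    by (simp add: mult_left_mono)
  have split: "(\<Sum>f\<in>I \<rightarrow>\<^sub>E A. W f * (if P f then 1 else 0)) = (\<Sum>f\<in>I \<rightarrow>\<^sub>E A. W f) - (\<Sum>f\<in>I \<rightarrow>\<^sub>E A. W f * (if P f then 0 else 1))"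
    by (simp add: sum_subtractf[symmetric]; intro sum.cong; simp)
  have ee: "exp (-T) * exp ((exp 1 - 1) * (\<Sum>t\<in>I. w t i)) = exp ((exp 1 - 1) * (\<Sum>t\<in>I. w t i) - T)"
    by (simp add: exp_add[symmetric])
  show ?thesis using b2 tot split unfolding W_def ee by linarith
qed

lemma t1:
  fixes x h :: real assumes x: "x \<ge> 10" and h: "h \<ge> 1"
  shows "2*h*x * (2/(x^2-1)) \<le> 5*h/x"
proof -
  have xx: "x^2 \<ge> 10 * x" using x by (simp add: power2_eq_square)
  have p: "x^2 - 1 > 0" "x > 0" using x xx by auto
  have "4*h*x*x \<le> 5*h*(x^2-1)"
  proof -
    have "h*(x^2) \<ge> h * 5" using x h xx by (intro mult_left_mono) auto
    then show ?thesis by (simp add: power2_eq_square algebra_simps)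
  qed
  then show ?thesis using p by (simp add: field_simps)
qed

lemma t1b:
  fixes x h :: real assumes x: "x \<ge> 10" and h: "h \<ge> 1"
  shows "2*h*x * (2/(x^2+1)) \<le> 5*h/x"
proof -
  have xx: "x^2 \<ge> 10 * x" using x by (simp add: power2_eq_square)
  have "2/(x^2+1) \<le> 2/(x^2-1)" using x xx
    by (intro divide_left_mono) auto
  then have "2*h*x * (2/(x^2+1)) \<le> 2*h*x * (2/(x^2-1))" using x h by (intro mult_left_mono) auto
  then show ?thesis using t1[OF x h] by linarith
qed

lemma t2:
  fixes x h :: real assumes x: "x \<ge> 10" and h: "h \<ge> 1"
  shows "(h*x+1)*x * (2/(x^3-x^2-1)) \<le> 3*h/x"
proof -
  have x0: "x > 0" using x by simp
  have x2: "x^2 \<ge> 10 * x" using x by (simp add: power2_eq_square)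
  have x3: "x^3 = x * x^2" by (simp add: power3_eq_cube power2_eq_square)
  have d: "x^3 - x^2 - 1 > 0"
  proof -
    have "x * x^2 \<ge> 10 * x^2" using x by (intro mult_right_mono) auto
    then show ?thesis using x2 x3 x by linarith
  qed
  have key: "2*(h*x+1)*x*x \<le> 3*h*(x^3-x^2-1)"
  proof -
    have a: "h*(x*x^2) \<ge> 10*(h*x^2)" using x h by (simp add: mult_right_mono mult_left_mono)
    have b: "h*x^2 \<ge> 10*(h*x)" using x2 h mult_left_mono[OF x2, of h] by (simp add: algebra_simps)
    have c: "h * x \<ge> 10*h" using x h mult_left_mono[OF x, of h] by (simp add: algebra_simps)
    have e: "h*x^2 \<ge> x^2" using h x by (simp add: mult_right_mono[of 1 h "x^2", simplified])
    have f1: "2*(h*x+1)*x*x = 2*(h*(x*x^2)) + 2*x^2" by (simp add: power2_eq_square algebra_simps)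
    have f2: "3*h*(x^3-x^2-1) = 3*(h*(x*x^2)) - 3*(h*x^2) - 3*h" by (simp add: x3 algebra_simps)
    show ?thesis unfolding f1 f2 using a b c e h by linarith
  qed
  show ?thesis using key d x0 by (simp add: field_simps)
qed

lemma t2b:
  fixes x h :: real assumes x: "x \<ge> 10" and h: "h \<ge> 1"
  shows "(h*x+1)*x * (2/(x^3-x^2+1)) \<le> 3*h/x"
proof -
  have x2: "x^2 \<ge> 10 * x" using x by (simp add: power2_eq_square)
  have x3: "x^3 = x * x^2" by (simp add: power3_eq_cube power2_eq_square)
  have d: "x^3 - x^2 - 1 > 0"
  proof -
    have "x * x^2 \<ge> 10 * x^2" using x by (intro mult_right_mono) auto
    then show ?thesis using x2 x3 x by linarith
  qed
  have "2/(x^3-x^2+1) \<le> 2/(x^3-x^2-1)" using d by (intro divide_left_mono) auto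
  then have "(h*x+1)*x * (2/(x^3-x^2+1)) \<le> (h*x+1)*x * (2/(x^3-x^2-1))" using x h by (intro mult_left_mono) auto
  then show ?thesis using t2[OF x h] by linarith
qed

lemma xi_bounds:
  fixes h s :: real and N V Vi :: nat
  assumes x: "real N \<ge> 10" and h: "h \<ge> 1" and Vi: "real Vi \<le> 2*h*real N" and VV: "Vi \<le> V"
    and V: "real V \<le> (h*real N+1)*real N" and s1: "8*h/(real N - 1) \<le> s"
    and s2: "8*h/(real N - 3/2) \<le> ln (1+s)" and s0: "0 \<le> s"
  shows "xi0 N V Vi \<ge> 1 - s \<and> xi1 N V Vi \<le> 1 + s"
proof -
  define x where "x = real N"
  have x10: "x \<ge> 10" using x x_def by simp
  have xx: "x^2 \<ge> 10 * x" using x10 by (simp add: power2_eq_square)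
  have x3: "x^3 = x * x^2" by (simp add: power3_eq_cube power2_eq_square)
  have xxx: "x*x^2 \<ge> 10*x^2" using x10 by (intro mult_right_mono) auto
  have dVV: "real (V - Vi) = real V - real Vi" using VV by simp
  have Vnn: "real Vi \<ge> 0" by simp
  have h8: "8*h/x \<le> 8*h/(x-1)" "8*h/x \<le> 8*h/(x - 3/2)" using x10 h
    by (auto intro!: divide_left_mono mult_pos_pos)
  have e8: "5*h/x + 3*h/x = 8*h/x" by (simp add: add_divide_distrib[symmetric])
  have s1': "8*h/(x-1) \<le> s" using s1 x_def by simp
  have s2': "8*h/(x-3/2) \<le> ln (1+s)" using s2 x_def by simp
  define a where "a = 2/(x^2+1)"
  define b where "b = 2/(x^3-x^2+1)"
  define c where "c = 2/(x^2-1)"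
  define d where "d = 2/(x^3-x^2-1)"
  have a0: "0 \<le> a" "a \<le> 1" unfolding a_def using xx x10 by auto
  have bd: "x^3-x^2+1 \<ge> 2" using xx xxx x3 x10 by linarith
  have b0: "0 \<le> b" "b \<le> 1" unfolding b_def using bd by auto
  have c0: "0 \<le> c" unfolding c_def using xx x10 by auto
  have dd: "x^3-x^2-1 \<ge> 1" using xx xxx x3 x10 by linarith
  have d0: "0 \<le> d" unfolding d_def using dd by auto
  have Via: "real Vi * a \<le> 5*h/x"
  proof -
    have "real Vi * a \<le> 2*h*x*a" using Vi a0 x_def by (intro mult_right_mono) auto
    then show ?thesis using t1b[OF x10 h] a_def by simp
  qed
  have Vic: "real Vi * c \<le> 5*h/x"
  proof -
    have "real Vi * c \<le> 2*h*x*c" using Vi c0 x_def by (intro mult_right_mono) auto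
    then show ?thesis using t1[OF x10 h] c_def by simp
  qed
  have Vb: "real V * b \<le> 3*h/x"
  proof -
    have "real V * b \<le> (h*x+1)*x*b" using V b0 x_def by (intro mult_right_mono) auto
    then show ?thesis using t2b[OF x10 h] b_def by simp
  qed
  have Vd: "real V * d \<le> 3*h/x"
  proof -
    have "real V * d \<le> (h*x+1)*x*d" using V d0 x_def by (intro mult_right_mono) auto
    then show ?thesis using t2[OF x10 h] d_def by simp
  qed
  have Vib: "real (V - Vi) * b \<le> real V * b" using dVV b0 by (simp add: mult_right_mono)
  have Vid: "real (V - Vi) * d \<le> real V * d" using dVV d0 by (simp add: mult_right_mono)
  have part0: "xi0 N V Vi \<ge> 1 - s"
  proof -
    have xi0_eq: "xi0 N V Vi = (1 + (-a))^Vi * (1 + (-b))^(V-Vi)"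
      unfolding xi0_def a_def b_def x_def by simp
    have B1: "1 + real (V-Vi) * (-b) \<le> (1 + (-b))^(V-Vi)" using b0 by (intro Bernoulli_inequality) auto
    have A1: "1 + real Vi * (-a) \<le> (1 + (-a))^Vi" using a0 by (intro Bernoulli_inequality) auto
    have sum_le: "real Vi * a + real V * b \<le> s" using Via Vb h8 s1' e8 by linarith
    show ?thesis
    proof (cases "1 - real Vi * a \<ge> 0")
      case False
      then have "s > 1" using sum_le b0 by (smt (verit) mult_nonneg_nonneg of_nat_0_le_iff)
      moreover have "xi0 N V Vi \<ge> 0" unfolding xi0_eq using a0 b0 by simp
      ultimately show ?thesis by linarith
    next
      case True
      have "(1 - real Vi * a) * (1 - real (V-Vi) * b) \<le> (1 + (-a))^Vi * (1 + (-b))^(V-Vi)"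
      proof -
        have "(1 - real Vi * a) * (1 - real (V-Vi) * b) \<le> (1 - real Vi * a) * (1 + (-b))^(V-Vi)"
          using B1 True by (intro mult_left_mono) auto
        also have "\<dots> \<le> (1 + (-a))^Vi * (1 + (-b))^(V-Vi)"
          using A1 b0 by (intro mult_right_mono) auto
        finally show ?thesis .
      qed
      moreover have "(1 - real Vi * a) * (1 - real (V-Vi) * b) \<ge> 1 - real Vi * a - real (V-Vi) * b"
        using a0 b0 by (simp add: algebra_simps)
      ultimately show ?thesis using xi0_eq sum_le Vib by linarith
    qed
  qed
  have part1: "xi1 N V Vi \<le> 1 + s"
  proof -
    have xi1_eq: "xi1 N V Vi = (1 + c)^Vi * (1 + d)^(V-Vi)"
      unfolding xi1_def c_def d_def x_def by simp
    have "(1 + c)^Vi \<le> exp c ^ Vi" using c0 by (intro power_mono) auto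
    moreover have "(1 + d)^(V-Vi) \<le> exp d ^ (V-Vi)" using d0 by (intro power_mono) auto
    ultimately have "xi1 N V Vi \<le> exp c ^ Vi * exp d ^ (V-Vi)"
      unfolding xi1_eq using c0 d0 by (intro mult_mono) auto
    also have "\<dots> = exp (real Vi * c + real (V-Vi) * d)"
      by (simp add: exp_add exp_of_nat_mult)
    also have "\<dots> \<le> exp (ln (1+s))"
      using Vic Vd Vid h8 s2' e8 by simp
    also have "\<dots> = 1 + s" using s0 by simp
    finally show ?thesis .
  qed
  show ?thesis using part0 part1 by simp
qed

theorem lemma8:
  fixes E :: "nat \<Rightarrow> nat \<Rightarrow> bool" and N M L :: nat and g :: "nat \<Rightarrow> real"
    and \<epsilon> \<mu> \<beta> \<sigma> h :: real and Adopt :: "nat set pmf" and i :: nat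
  assumes E_in: "\<And>a b. E a b \<Longrightarrow> a \<in> agents N \<and> b \<in> agents N"
    and E_sym: "\<And>a b. E a b \<Longrightarrow> E b a"
    and E_irrefl: "\<And>a. \<not> E a a"
    and conn: "graph_connected E N"
    and nonbip: "\<not> graph_bipartite E N"
    and M_pos: "M \<ge> 1"
    and eps: "\<epsilon> > 0" and mu: "0 < \<mu>" "\<mu> < 1"
    and beta: "1/2 < \<beta>" "\<beta> < 1"
    and sigma: "\<sigma> \<ge> 11"
    and h_def: "h = 16 * \<sigma> / (1 - \<beta>)"
    and g_lower: "\<And>l. l > 0 \<Longrightarrow> eventually (\<lambda>n. g n > l * ln (real n)) sequentially"
    and g_upper: "\<And>l. l > 0 \<Longrightarrow> eventually (\<lambda>n. g n < l * real n) sequentially"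
    and mixing: "\<And>s j. s \<in> agents N \<Longrightarrow> j \<in> agents N \<Longrightarrow>
        1 / real N - 1 / real N ^ 3 \<le> walkprob E N L s j \<and>
        walkprob E N L s j \<le> 1 / real N + 1 / real N ^ 3"
    and N1: "g N < real N"
    and N2: "(real N - 1) * sqrt (ln (real N) / real N) \<ge> 8 * h / sqrt 5"
    and N3: "(real N - 3/2) * ln (1 + sqrt (5 * ln (real N) / real N)) \<ge> 8 * h"
    and adopt: "set_pmf Adopt \<subseteq> Pow (agents N)"
    and i_in: "i \<in> agents N"
  shows "measure_pmf.expectation Adopt
           (\<lambda>S. let K = nat \<lceil>h * g N\<rceil> in
              ends_prob E N L S K
                (\<lambda>f. let V = K * card S; Vi = card {t \<in> tokens S K. f t = i} in
                     xi0 N V Vi \<ge> 1 - sqrt (5 * ln (real N) / real N) \<and>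
                     xi1 N V Vi \<le> 1 + sqrt (5 * ln (real N) / real N)))
         \<ge> 1 - (6 * real M + 3) / real N ^ 10"
proof -
  define x where "x = real N"
  define s where "s = sqrt (5 * ln (real N) / real N)"
  have N1': "N \<ge> 1" using i_in by (auto simp: agents_def)
  have x1: "x \<ge> 1" using N1' x_def by simp
  have hge: "h \<ge> 176"
  proof -
    have "16 * \<sigma> / (1 - \<beta>) \<ge> 16 * \<sigma>" using beta sigma by (simp add: le_divide_eq)
    then show ?thesis using h_def sigma by linarith
  qed
  have lnx0: "ln x \<ge> 0" using x1 by simp
  have lnxx: "ln x \<le> x" using x1 ln_le_minus_one[of x] by simp
  have s0: "s \<ge> 0" unfolding s_def using lnx0 x1 x_def by simp
  have s3: "s \<le> 3"
  proof -
    have "5 * ln x / x \<le> 3^2" using lnxx x1 by (simp add: divide_le_eq)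
    then have "s \<le> sqrt (3^2)" unfolding s_def x_def by (intro real_sqrt_le_mono) simp
    then show ?thesis by simp
  qed
  have ls: "ln (1+s) \<le> 3" using ln_add_one_self_le_self[OF s0] s3 by linarith
  have ls0: "ln (1+s) \<ge> 0" using s0 by simp
  have N3': "(x - 3/2) * ln (1 + s) \<ge> 8 * h" using N3 unfolding s_def x_def by simp
  have xgt: "x > 3/2"
  proof (rule ccontr)
    assume "\<not> x > 3/2"
    then have "(x - 3/2) * ln (1 + s) \<le> 0" using ls0 by (simp add: mult_nonpos_nonneg)
    then show False using N3' hge by linarith
  qed
  have "(x - 3/2) * ln (1 + s) \<le> (x - 3/2) * 3" using ls xgt by (intro mult_left_mono) auto
  moreover have "(x - 3/2) * 3 = 3*x - 9/2" by (simp add: algebra_simps)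
  ultimately have x10: "x \<ge> 10" using N3' hge by linarith
  have s1: "8*h/(real N - 1) \<le> s"
  proof -
    have "s = sqrt 5 * sqrt (ln (real N) / real N)" unfolding s_def by (simp add: real_sqrt_mult[symmetric])
    then have "(x - 1) * s = sqrt 5 * ((real N - 1) * sqrt (ln (real N) / real N))" using x_def by simp
    also have "\<dots> \<ge> sqrt 5 * (8 * h / sqrt 5)" using N2 by (intro mult_left_mono) auto
    finally have "(x-1) * s \<ge> 8 * h" by simp
    then show ?thesis using x10 x_def by (simp add: divide_le_eq mult.commute)
  qed
  have s2: "8*h/(real N - 3/2) \<le> ln (1+s)"
    using N3' x10 x_def by (simp add: divide_le_eq mult.commute)
  have fin_ag: "finite (agents N)" by (simp add: agents_def)
  have card_ag: "card (agents N) = N" by (simp add: agents_def)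
  define c where "c = 1 - (6 * real M + 3) / real N ^ 10"
  define F where "F = (\<lambda>S. let K = nat \<lceil>h * g N\<rceil> in
              ends_prob E N L S K
                (\<lambda>f. let V = K * card S; Vi = card {t \<in> tokens S K. f t = i} in
                     xi0 N V Vi \<ge> 1 - sqrt (5 * ln (real N) / real N) \<and>
                     xi1 N V Vi \<le> 1 + sqrt (5 * ln (real N) / real N)))"
  have perS: "F S \<ge> c" if S: "S \<subseteq> agents N" for S
  proof -
    define K where "K = nat \<lceil>h * g N\<rceil>"
    have finS: "finite S" using S fin_ag finite_subset by blast
    have cS: "card S \<le> N" using card_mono[OF fin_ag S] card_ag by simp
    have Kb: "real K \<le> h * x + 1"
    proof (cases "h * g N \<le> 0")
      case True
      then have "K = 0" unfolding K_def by simp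
      then show ?thesis using hge x1 by simp
    next
      case False
      then have "real K = real_of_int \<lceil>h * g N\<rceil>" unfolding K_def by simp
      also have "\<dots> < h * g N + 1" by linarith
      also have "h * g N \<le> h * x" using N1 hge x_def by (intro mult_left_mono) auto
      finally show ?thesis by simp
    qed
    define V where "V = K * card S"
    have Vb: "real V \<le> (h * x + 1) * x"
      unfolding V_def using Kb cS x_def hge x1 by (simp add: mult_mono)
    have ctok: "card (tokens S K) = V" unfolding tokens_def V_def by (simp add: card_cartesian_product)
    have fintok: "finite (tokens S K)" unfolding tokens_def using finS by simp
    have tokS: "fst t \<in> agents N" if "t \<in> tokens S K" for t using that S unfolding tokens_def by auto
    let ?w = "\<lambda>t j. walkprob E N L (fst t) j"
    let ?P = "(\<lambda>f. let V = K * card S; Vi = card {t \<in> tokens S K. f t = i} in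
                     xi0 N V Vi \<ge> 1 - sqrt (5 * ln (real N) / real N) \<and>
                     xi1 N V Vi \<le> 1 + sqrt (5 * ln (real N) / real N))"
    have x3pos: "1 / x ^ 3 \<le> 1 / x"
    proof -
      have "x*x \<ge> 1*1" using x1 by (intro mult_mono) auto
      then have "x*x*x \<ge> 1*x" using x1 by (intro mult_mono) auto
      then show ?thesis using x1 by (intro divide_left_mono) (auto simp: power3_eq_cube)
    qed
    have ch: "(\<Sum>f\<in>tokens S K \<rightarrow>\<^sub>E agents N. (\<Prod>t\<in>tokens S K. ?w t (f t)) * (if ?P f then 1 else 0))
          \<ge> 1 - exp ((exp 1 - 1) * (\<Sum>t\<in>tokens S K. ?w t i) - 2*h*x)"
    proof (rule chernoff_fin[OF fintok fin_ag i_in])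
      fix t j assume t: "t \<in> tokens S K" and j: "j \<in> agents N"
      show "0 \<le> ?w t j" using mixing[OF tokS[OF t] j] x3pos[unfolded x_def] by linarith
    next
      fix t assume t: "t \<in> tokens S K"
      show "(\<Sum>j\<in>agents N. ?w t j) = 1" using walk_rowsum[where E=E, OF E_irrefl tokS[OF t]] .
    next
      fix f assume f: "f \<in> tokens S K \<rightarrow>\<^sub>E agents N"
        and cf: "real (card {t \<in> tokens S K. f t = i}) \<le> 2*h*x"
      define Vi where "Vi = card {t \<in> tokens S K. f t = i}"
      have ViV: "Vi \<le> V" unfolding Vi_def ctok[symmetric] using fintok by (intro card_mono) auto
      have "xi0 N V Vi \<ge> 1 - s \<and> xi1 N V Vi \<le> 1 + s"
        using xi_bounds[of N h Vi V s] x10 hge cf ViV Vb s1 s2 s0 x_def Vi_def by simp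
      then show "?P f" unfolding Let_def Vi_def[symmetric] V_def[symmetric] s_def by simp
    qed
    have sw: "(\<Sum>t\<in>tokens S K. ?w t i) \<le> (h*x+1) * (101/100)"
    proof -
      have "(\<Sum>t\<in>tokens S K. ?w t i) \<le> (\<Sum>t\<in>tokens S K. 1/x + 1/x^3)"
        using mixing tokS i_in x_def by (intro sum_mono) auto
      also have "\<dots> = real V * (1/x + 1/x^3)" using ctok by simp
      also have "\<dots> \<le> (h * x + 1) * x * (1/x + 1/x^3)" using Vb x1 by (intro mult_right_mono) auto
      also have "\<dots> = (h*x+1) * (1 + 1/x^2)" using x1 by (simp add: field_simps power2_eq_square power3_eq_cube)
      also have "\<dots> \<le> (h*x+1) * (101/100)"
      proof -
        have "x^2 \<ge> 100" using x10 mult_mono[OF x10 x10] by (simp add: power2_eq_square)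
        then have "1/x^2 \<le> 1/100" by (intro divide_left_mono) auto
        then show ?thesis using hge x1 by (intro mult_left_mono) auto
      qed
      finally show ?thesis .
    qed
    have e1: "exp 1 - 1 \<le> ((43/25)::real)" using e_less_272 by simp
    have e0: "exp 1 - 1 \<ge> (0::real)" by simp
    have "(exp 1 - 1) * (\<Sum>t\<in>tokens S K. ?w t i) \<le> (43/25) * ((h*x+1) * (101/100))"
    proof -
      have sw0: "(\<Sum>t\<in>tokens S K. ?w t i) \<ge> 0"
        using mixing tokS i_in x3pos[unfolded x_def] by (intro sum_nonneg) (smt (verit))
      show ?thesis using e1 e0 sw sw0 by (intro mult_mono) auto
    qed
    moreover have "h * x \<ge> 176 * x" using hge x1 by (intro mult_right_mono) auto
    moreover have "((43/25)::real) * ((h*x+1) * (101/100)) = (4343/2500) * (h*x) + (4343/2500)" by (simp add: algebra_simps)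
    moreover have "2*h*x = 2*(h*x)" by simp
    ultimately have expo: "(exp 1 - 1) * (\<Sum>t\<in>tokens S K. ?w t i) - 2*h*x \<le> - (10 * ln x)"
      using lnxx x10 by linarith
    have "exp ((exp 1 - 1) * (\<Sum>t\<in>tokens S K. ?w t i) - 2*h*x) \<le> exp (- (10 * ln x))"
      using expo by simp
    also have "exp (- (10 * ln x)) = 1 / x ^ 10"
    proof -
      have "exp (real 10 * ln x) = exp (ln x) ^ 10" by (rule exp_of_nat_mult)
      then have "exp (10 * ln x) = x ^ 10" using x1 by simp
      then show ?thesis by (simp add: exp_minus inverse_eq_divide)
    qed
    also have "\<dots> \<le> (6 * real M + 3) / real N ^ 10" unfolding x_def using x1 by (intro divide_right_mono) auto
    finally have "exp ((exp 1 - 1) * (\<Sum>t\<in>tokens S K. ?w t i) - 2*h*x) \<le> (6 * real M + 3) / real N ^ 10" .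
    then have "ends_prob E N L S K ?P \<ge> c" using ch unfolding ends_prob_def c_def by linarith
    then show ?thesis unfolding F_def K_def Let_def by simp
  qed
  have "measure_pmf.expectation Adopt F = (\<Sum>S\<in>Pow (agents N). F S * pmf Adopt S)"
    using adopt fin_ag by (intro integral_measure_pmf_real) auto
  also have "\<dots> \<ge> (\<Sum>S\<in>Pow (agents N). c * pmf Adopt S)"
  proof (rule sum_mono)
    fix S assume "S \<in> Pow (agents N)"
    then show "c * pmf Adopt S \<le> F S * pmf Adopt S" using perS by (intro mult_right_mono) auto
  qed
  moreover have "(\<Sum>S\<in>Pow (agents N). c * pmf Adopt S) = c"
    using sum_pmf_eq_1[of "Pow (agents N)" Adopt] adopt fin_ag by (simp add: sum_distrib_left[symmetric])
  ultimately have "measure_pmf.expectation Adopt F \<ge> c" by linarith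
  then show ?thesis unfolding F_def c_def .
qed

end
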